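(* Let $Z$ and $X$ be as in the context. Then $Z^{-1}=XZX$. In particular, $Z^{-1}\in\mathcal{DR}_0$.
   Context: $\mathbf N=\{1,2,\dots\}$. For $k,m\in\mathbf N$, $\alpha_k(m)$ is the number of $k$-tuples $(m_1,\dots,m_k)$ of integers $\ge2$ with $m_1\cdots m_k=m$. The divisor matrix $D=(d_{i,j})_{i,j\in\mathbf N}$ has $d_{i,j}=1$ if $i\mid j$ and $0$ otherwise. $Z=(\alpha(i,j))_{i,j\in\mathbf N}$ is the matrix whose odd-indexed rows have a single nonzero entry, equal to $1$, on the diagonal, and whose $i$-th row, for $i=2^kd$ with $d$ odd and $k\ge1$, equals the $d$-th row of $(D-I)^k$ (equivalently $\alpha(i,j)=\alpha_k(j/d)$ if $d\mid j$ and $0$ otherwise). $Z$ is upper unitriangular. $v_2(i)$ is the exponent of $2$ in $i$, and $X$ is the diagonal matrix with $(i,i)$ entry $(-1)^{v_2(i)}$. $\mathcal{DR}_0$ is the set of $\mathbf N\times\mathbf N$ complex matrices $A=(a_{i,j})$ for which there exist positive constants $C,c$ with $a_{i,j}=0$ whenever $i>Cj^c$ and $|a_{i,j}|\le Cj^c$ for all $i,j$. *)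

theory Defs
  imports "HOL-Analysis.Analysis" "HOL-Computational_Algebra.Primes"
begin

(* N x N complex matrices, represented as functions nat => nat => complex;
   only indices >= 1 are meaningful. *)
type_synonym cmat = "nat \<Rightarrow> nat \<Rightarrow> complex"

definition v2 :: "nat \<Rightarrow> nat" where
  "v2 i = multiplicity (2::nat) i"

definition alpha_k :: "nat \<Rightarrow> nat \<Rightarrow> nat" where
  "alpha_k k m = card {xs :: nat list. length xs = k \<and> (\<forall>x\<in>set xs. 2 \<le> x) \<and> prod_list xs = m}"

definition Zmat :: cmat where
  "Zmat i j = (let d = i div 2 ^ v2 i in
      if d dvd j then of_nat (alpha_k (v2 i) (j div d)) else 0)"

definition Xmat :: cmat where
  "Xmat i j = (if i = j then (-1) ^ v2 i else 0)"

definition Imat :: cmat where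
  "Imat i j = (if i = j then 1 else 0)"

definition mmult :: "cmat \<Rightarrow> cmat \<Rightarrow> cmat" (infixl "\<odot>" 70) where
  "(A \<odot> B) i j = infsum (\<lambda>k. A i k * B k j) {1..}"

definition mat_eq :: "cmat \<Rightarrow> cmat \<Rightarrow> bool" where
  "mat_eq A B \<longleftrightarrow> (\<forall>i\<ge>1. \<forall>j\<ge>1. A i j = B i j)"

definition DR0 :: "cmat set" where
  "DR0 = {A. \<exists>C c :: real. C > 0 \<and> c > 0 \<and>
      (\<forall>i\<ge>1. \<forall>j\<ge>1. real i > C * real j powr c \<longrightarrow> A i j = 0) \<and>
      (\<forall>i\<ge>1. \<forall>j\<ge>1. cmod (A i j) \<le> C * real j powr c)}"

end

theory Submission
  imports Defs
begin


definition od :: "nat \<Rightarrow> nat" where "od n = n div 2 ^ v2 n"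

lemma od_mult_pow: "od n * 2 ^ v2 n = n"
  unfolding od_def v2_def using multiplicity_dvd[of "2::nat" n] by simp

lemma od_pos: "n > 0 \<Longrightarrow> od n > 0"
  using od_mult_pow[of n] by (metis gr0I mult_0)

lemma od_odd: "n > 0 \<Longrightarrow> odd (od n)"
  unfolding od_def v2_def using multiplicity_decompose[where p="2::nat" and x=n] by simp

lemma v2_mult: "m > 0 \<Longrightarrow> n > 0 \<Longrightarrow> v2 (m * n) = v2 m + v2 n"
  unfolding v2_def by (rule prime_elem_multiplicity_mult_distrib) auto

lemma od_mult: assumes "m > 0" "n > 0" shows "od (m * n) = od m * od n"
proof -
  have "od (m*n) * 2 ^ v2 (m*n) = m * n" by (rule od_mult_pow)
  also have "\<dots> = (od m * od n) * 2 ^ v2 (m*n)"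
  proof -
    have "m * n = (od m * 2 ^ v2 m) * (od n * 2 ^ v2 n)" using od_mult_pow[of m] od_mult_pow[of n] by simp
    also have "\<dots> = (od m * od n) * 2 ^ (v2 m + v2 n)" by (simp add: power_add)
    finally show ?thesis using v2_mult[OF assms] by simp
  qed
  finally show ?thesis by simp
qed

lemma v2_odd: "odd n \<Longrightarrow> v2 n = 0"
  unfolding v2_def by (rule not_dvd_imp_multiplicity_0) auto

lemma od_odd_id: "odd n \<Longrightarrow> od n = n"
  unfolding od_def using v2_odd by simp

lemma v2_double: "n > 0 \<Longrightarrow> v2 (2 * n) = Suc (v2 n)"
  unfolding v2_def by (rule multiplicity_times_same) auto

lemma od_double: assumes "n > 0" shows "od (2 * n) = od n"
proof -
  have "v2 2 = 1" unfolding v2_def by (simp add: multiplicity_self)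
  then have "od 2 = 1" unfolding od_def by simp
  then show ?thesis using od_mult[of 2 n] assms by simp
qed



definition Sk :: "nat \<Rightarrow> nat \<Rightarrow> nat list set" where
  "Sk k n = {xs. length xs = k \<and> (\<forall>x\<in>set xs. 2 \<le> x) \<and> prod_list xs = n}"

lemma al_Sk: "alpha_k k n = card (Sk k n)"
  unfolding alpha_k_def Sk_def by simp

lemma prod_list_ge: "(\<forall>x\<in>set xs. 2 \<le> x) \<Longrightarrow> 2 ^ length xs \<le> prod_list (xs::nat list)"
  by (induction xs) (auto intro: mult_le_mono)

lemma prod_list_mem_le: "(\<forall>x\<in>set xs. 2 \<le> x) \<Longrightarrow> x \<in> set xs \<Longrightarrow> x \<le> prod_list (xs::nat list)"
proof (induction xs)
  case Nil then show ?case by simp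
next
  case (Cons a xs)
  have p: "1 \<le> prod_list xs" using prod_list_ge[of xs] Cons.prems(1)
    by (metis list.set_intros(2) one_le_numeral one_le_power order.trans)
  show ?case
  proof (cases "x = a")
    case True then show ?thesis using p by simp
  next
    case False
    then have "x \<le> prod_list xs" using Cons by auto
    moreover have "1 \<le> a" using Cons.prems by auto
    ultimately show ?thesis by (simp add: order_trans[OF _ mult_le_mono1[of 1 a]])
  qed
qed

lemma finite_Sk: "finite (Sk k n)"
proof -
  have "Sk k n \<subseteq> {xs. set xs \<subseteq> {..n} \<and> length xs = k}"
    unfolding Sk_def using prod_list_mem_le by fastforce
  moreover have "finite {xs. set xs \<subseteq> {..n} \<and> length xs = k}"
    by (rule finite_lists_length_eq) simp
  ultimately show ?thesis by (rule finite_subset)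
qed

lemma al_nonzero: "alpha_k k n \<noteq> 0 \<Longrightarrow> 2 ^ k \<le> n"
proof -
  assume "alpha_k k n \<noteq> 0"
  then have "Sk k n \<noteq> {}" unfolding al_Sk by auto
  then obtain xs where "xs \<in> Sk k n" by auto
  then show ?thesis unfolding Sk_def using prod_list_ge by auto
qed

lemma al_zero_big: "n < 2 ^ k \<Longrightarrow> alpha_k k n = 0"
  using al_nonzero by force

lemma al_0_n: "alpha_k 0 n = (if n = 1 then 1 else 0)"
proof -
  have "Sk 0 n = (if n = 1 then {[]} else {})" unfolding Sk_def by auto
  then show ?thesis unfolding al_Sk by simp
qed

definition PD :: "nat \<Rightarrow> nat set" where
  "PD n = {d\<in>{1..n}. d dvd n \<and> d < n}"

lemma finite_PD: "finite (PD n)" unfolding PD_def by simp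

lemma Sk_Suc: assumes "n > 0"
  shows "Sk (Suc k) n = (\<Union>d\<in>PD n. (\<lambda>ys. (n div d) # ys) ` Sk k d)"
proof
  show "Sk (Suc k) n \<subseteq> (\<Union>d\<in>PD n. (\<lambda>ys. (n div d) # ys) ` Sk k d)"
  proof
    fix xs assume "xs \<in> Sk (Suc k) n"
    then obtain x ys where xs: "xs = x # ys" and l: "length ys = k" and x2: "2 \<le> x"
      and ys2: "\<forall>y\<in>set ys. 2 \<le> y" and pr: "x * prod_list ys = n"
      unfolding Sk_def by (cases xs) auto
    define d where "d = prod_list ys"
    have d1: "d \<ge> 1" using prod_list_ge[OF ys2] unfolding d_def
      by (metis one_le_numeral one_le_power order.trans)
    have dn: "d dvd n" using pr d_def by auto
    have "d < n" using pr d1 x2 unfolding d_def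
      by (metis less_le_trans lessI mult_le_mono1 mult_1 one_le_numeral Suc_1 Suc_le_eq nat_mult_1 less_2_cases_iff
          mult.commute n_less_m_mult_n order.strict_iff_not)
    then have "d \<in> PD n" using d1 dn unfolding PD_def by auto
    moreover have "n div d = x" using pr d1 unfolding d_def by auto
    ultimately show "xs \<in> (\<Union>d\<in>PD n. (\<lambda>ys. (n div d) # ys) ` Sk k d)"
      using xs l ys2 d_def unfolding Sk_def by auto
  qed
next
  show "(\<Union>d\<in>PD n. (\<lambda>ys. (n div d) # ys) ` Sk k d) \<subseteq> Sk (Suc k) n"
  proof clarify
    fix d ys assume d: "d \<in> PD n" and ys: "ys \<in> Sk k d"
    have "d dvd n" "d < n" "d \<ge> 1" using d unfolding PD_def by auto
    then have "n div d \<ge> 2"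
      by (metis One_nat_def div_less_iff_less_mult dvd_div_mult_self le_neq_implies_less
          less_le_trans less_numeral_extra(1) linorder_not_le mult.left_neutral nat_dvd_not_less
          Suc_1 Suc_leI dvd_div_eq_0_iff less_one neq0_conv)
    moreover have "(n div d) * d = n" using \<open>d dvd n\<close> by simp
    ultimately show "(n div d) # ys \<in> Sk (Suc k) n" using ys unfolding Sk_def by auto
  qed
qed

lemma al_Suc_pos: assumes "n > 0"
  shows "alpha_k (Suc k) n = (\<Sum>d\<in>PD n. alpha_k k d)"
proof -
  have "card (\<Union>d\<in>PD n. (\<lambda>ys. (n div d) # ys) ` Sk k d) = (\<Sum>d\<in>PD n. card ((\<lambda>ys. (n div d) # ys) ` Sk k d))"
  proof (rule card_UN_disjoint)
    show "finite (PD n)" by (rule finite_PD)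
    show "\<forall>i\<in>PD n. finite ((\<lambda>ys. (n div i) # ys) ` Sk k i)" using finite_Sk by auto
    show "\<forall>i\<in>PD n. \<forall>j\<in>PD n. i \<noteq> j \<longrightarrow> ((\<lambda>ys. (n div i) # ys) ` Sk k i) \<inter> ((\<lambda>ys. (n div j) # ys) ` Sk k j) = {}"
      unfolding Sk_def by auto
  qed
  also have "\<dots> = (\<Sum>d\<in>PD n. card (Sk k d))"
    by (rule sum.cong) (auto intro: card_image inj_onI)
  finally show ?thesis unfolding al_Sk using Sk_Suc[OF assms] by simp
qed

lemma al_k_0: "alpha_k k 0 = 0"
  using al_zero_big[of 0 k] by simp

lemma al_Suc: "alpha_k (Suc k) n = (\<Sum>d\<in>PD n. alpha_k k d)"
  using al_Suc_pos[of n k] al_k_0 by (cases "n = 0") (auto simp: PD_def)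



definition chi :: "nat \<Rightarrow> int" where "chi n = (-1) ^ v2 n"

definition psi :: "nat \<Rightarrow> nat \<Rightarrow> nat \<Rightarrow> int" where
  "psi l J n = chi n * (if od n dvd J then int (alpha_k (l + v2 n) (J div od n)) else 0)"

lemma od_0: "od 0 = 0" unfolding od_def by simp

lemma psi_0: "psi l J 0 = 0"
  unfolding psi_def od_0 by (simp add: al_k_0)

lemma psi_support: assumes "psi l J n \<noteq> 0" shows "2 ^ l * n \<le> J"
proof -
  have dv: "od n dvd J" and a: "alpha_k (l + v2 n) (J div od n) \<noteq> 0"
    using assms unfolding psi_def by (auto split: if_splits)
  have "2 ^ (l + v2 n) \<le> J div od n" using al_nonzero[OF a] .
  then have "2 ^ (l + v2 n) * od n \<le> J div od n * od n" by simp
  also have "\<dots> = J" using dv by simp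
  also have "2 ^ (l + v2 n) * od n = 2 ^ l * n"
    using od_mult_pow[of n] by (simp add: power_add algebra_simps)
  finally show ?thesis .
qed

lemma psi_support': "2 ^ l * n > J \<Longrightarrow> psi l J n = 0"
  using psi_support by force

lemma chi_odd: "odd c \<Longrightarrow> chi c = 1" unfolding chi_def using v2_odd by simp

lemma psi_odd: "odd c \<Longrightarrow> psi l J c = (if c dvd J then int (alpha_k l (J div c)) else 0)"
  unfolding psi_def using chi_odd od_odd_id v2_odd by simp

lemma psi_double: assumes "c > 0" shows "psi l J (2 * c) = - psi (Suc l) J c"
  unfolding psi_def chi_def using v2_double[OF assms] od_double[OF assms] by simp

lemma chi_mult: "d > 0 \<Longrightarrow> c > 0 \<Longrightarrow> chi (d * c) = chi d * chi c"
  unfolding chi_def by (simp add: v2_mult power_add)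

lemma psi_mult: assumes d: "d > 0" and c: "c > 0"
  shows "psi l J (d * c) = chi d * (if od d dvd J then psi (l + v2 d) (J div od d) c else 0)"
proof (cases "od d dvd J")
  case True
  have pd: "od d > 0" using od_pos d by simp
  then obtain q where q: "J = od d * q" using True by auto
  have e1: "(od d * od c dvd J) = (od c dvd J div od d)" using q pd by simp
  have e2: "J div (od d * od c) = J div od d div od c" by (simp add: div_mult2_eq)
  show ?thesis using True unfolding psi_def
    by (simp add: od_mult[OF d c] v2_mult[OF d c] chi_mult[OF d c] e1 e2 add.assoc)
next
  case False
  then have "\<not> od d * od c dvd J" using dvd_mult_left by blast
  then show ?thesis using False unfolding psi_def by (simp add: od_mult[OF d c])
qed

definition Dv :: "nat \<Rightarrow> nat set" where "Dv n = {d\<in>{1..n}. d dvd n}"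

lemma Dv_insert: "n > 0 \<Longrightarrow> Dv n = insert n (PD n)"
  unfolding Dv_def PD_def by (auto simp: dvd_imp_le)

lemma al_E: "int (alpha_k l n) + int (alpha_k (Suc l) n) = (\<Sum>d\<in>Dv n. int (alpha_k l d))"
proof (cases "n = 0")
  case True then show ?thesis by (simp add: al_k_0 Dv_def)
next
  case False
  then have "Dv n = insert n (PD n)" "n \<notin> PD n" using Dv_insert unfolding PD_def by auto
  then show ?thesis using al_Suc[of l n] finite_PD by (simp add: of_nat_sum)
qed

lemma sum_split_P: "finite A \<Longrightarrow> sum f A = sum f {x\<in>A. P x} + sum f {x\<in>A. \<not> P x}"
proof -
  assume fA: "finite A"
  have "A = {x\<in>A. P x} \<union> {x\<in>A. \<not> P x}" by auto
  then have "sum f A = sum f ({x\<in>A. P x} \<union> {x\<in>A. \<not> P x})" by simp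
  also have "\<dots> = sum f {x\<in>A. P x} + sum f {x\<in>A. \<not> P x}"
    by (rule sum.union_disjoint) (use fA in auto)
  finally show ?thesis .
qed

lemma Dv_even: assumes "J > 0"
  shows "{d\<in>Dv J. \<not> odd (J div d)} = (if even J then Dv (J div 2) else {})"
proof (cases "even J")
  case True
  show ?thesis
  proof (simp add: True, rule set_eqI, rule iffI)
    fix d assume "d \<in> {d \<in> Dv J. even (J div d)}"
    then have d: "d dvd J" "d \<ge> 1" "d \<le> J" "even (J div d)" unfolding Dv_def by auto
    then obtain q where q: "J = d * q" by auto
    then have "q = J div d" using d by simp
    then have "even q" using d by simp
    then obtain r where r: "q = 2 * r" by auto
    then have J2: "J div 2 = d * r" using q by simp
    then have "r > 0" using assms True by (metis q r mult_0_right neq0_conv)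
    then have "d \<le> J div 2" using J2 by simp
    then show "d \<in> Dv (J div 2)" unfolding Dv_def using d J2 by simp
  next
    fix d assume "d \<in> Dv (J div 2)"
    then have d: "d dvd J div 2" "d \<ge> 1" unfolding Dv_def by auto
    then obtain r where r: "J div 2 = d * r" by auto
    then have J: "J = d * (2 * r)" using True by auto
    then have "J div d = 2 * r" using d by simp
    moreover have "d \<le> J" using J assms by (simp add: dvd_imp_le)
    ultimately show "d \<in> {d \<in> Dv J. even (J div d)}" unfolding Dv_def using J d by auto
  qed
next
  case False
  have "\<And>d. d \<in> Dv J \<Longrightarrow> odd (J div d)"
  proof -
    fix d assume "d \<in> Dv J"
    then have "d dvd J" unfolding Dv_def by auto
    then have "J = d * (J div d)" by simp
    then show "odd (J div d)" using False by (metis even_mult_iff)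
  qed
  then show ?thesis using False by auto
qed

lemma Dv_split: assumes "J > 0"
  shows "(\<Sum>d\<in>Dv J. f d) = (\<Sum>d\<in>{d\<in>Dv J. odd (J div d)}. f d)
     + (if even J then (\<Sum>d\<in>Dv (J div 2). f d) else (0::int))"
proof -
  have fin: "finite (Dv J)" unfolding Dv_def by simp
  show ?thesis using sum_split_P[OF fin, of f "\<lambda>d. odd (J div d)"] Dv_even[OF assms] by simp
qed

lemma odd_reindex: assumes "J > 0"
  shows "(\<Sum>d\<in>{d\<in>Dv J. odd (J div d)}. f d) = (\<Sum>c\<in>{c\<in>{1..J}. odd c \<and> c dvd J}. f (J div c))"
proof (rule sum.reindex_bij_witness[of _ "\<lambda>c. J div c" "\<lambda>d. J div d"])
  fix c assume "c \<in> {c\<in>{1..J}. odd c \<and> c dvd J}"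
  then have c: "c dvd J" "c \<ge> 1" "odd c" by auto
  then obtain q where q: "J = c * q" by auto
  have q0: "q > 0" using q assms by (metis mult_0_right neq0_conv)
  have Jc: "J div c = q" using q c by simp
  have Jq: "J div q = c" using q q0 by simp
  show "J div (J div c) = c" using Jc Jq by simp
  show "J div c \<in> {d\<in>Dv J. odd (J div d)}"
    unfolding Dv_def using Jc Jq q q0 c by (auto simp: dvd_imp_le assms)
next
  fix d assume "d \<in> {d\<in>Dv J. odd (J div d)}"
  then have d: "d dvd J" "d \<ge> 1" "odd (J div d)" unfolding Dv_def by auto
  then obtain q where q: "J = d * q" by auto
  have q0: "q > 0" using q assms by (metis mult_0_right neq0_conv)
  have Jc: "J div d = q" using q d by simp
  have Jq: "J div q = d" using q q0 by simp
  show "J div (J div d) = d" using Jc Jq by simp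
  show "f (J div (J div d)) = f d" using Jc Jq by simp
  show "J div d \<in> {c\<in>{1..J}. odd c \<and> c dvd J}"
    using Jc Jq q q0 d by (auto simp: dvd_imp_le assms)
qed


definition Tsum :: "nat \<Rightarrow> nat \<Rightarrow> int" where
  "Tsum l J = (\<Sum>c\<in>{1..J}. psi l J c)"

definition Rf :: "nat \<Rightarrow> nat \<Rightarrow> int" where
  "Rf l J = int (alpha_k l J) - (if even J then int (alpha_k l (J div 2)) else 0)"

lemma psi_range_half: "(\<Sum>c\<in>{1..J}. psi (Suc l) J c) = (\<Sum>c\<in>{1..J div 2}. psi (Suc l) J c)"
proof (rule sum.mono_neutral_right)
  show "finite {1..J}" by simp
  show "{1..J div 2} \<subseteq> {1..J}" by auto
  show "\<forall>c\<in>{1..J} - {1..J div 2}. psi (Suc l) J c = 0"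
  proof
    fix c assume "c \<in> {1..J} - {1..J div 2}"
    then have "2 * c > J" by auto
    moreover have "2 ^ Suc l * c \<ge> 2 * c" by simp
    ultimately have "2 ^ Suc l * c > J" by linarith
    then show "psi (Suc l) J c = 0" by (rule psi_support')
  qed
qed

lemma Tsum_step: "Tsum l J = (\<Sum>c\<in>{c\<in>{1..J}. odd c \<and> c dvd J}. int (alpha_k l (J div c))) - Tsum (Suc l) J"
proof -
  have "Tsum l J = (\<Sum>c\<in>{c\<in>{1..J}. odd c}. psi l J c) + (\<Sum>c\<in>{c\<in>{1..J}. \<not> odd c}. psi l J c)"
    unfolding Tsum_def by (rule sum_split_P) simp
  also have "(\<Sum>c\<in>{c\<in>{1..J}. odd c}. psi l J c) = (\<Sum>c\<in>{c\<in>{1..J}. odd c}. if c dvd J then int (alpha_k l (J div c)) else 0)"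
    by (rule sum.cong) (auto simp: psi_odd)
  also have "\<dots> = (\<Sum>c\<in>{c\<in>{c\<in>{1..J}. odd c}. c dvd J}. int (alpha_k l (J div c)))"
    by (rule sum.inter_filter[symmetric]) simp
  also have "{c\<in>{c\<in>{1..J}. odd c}. c dvd J} = {c\<in>{1..J}. odd c \<and> c dvd J}" by auto
  also have "{c\<in>{1..J}. \<not> odd c} = (\<lambda>c. 2 * c) ` {1..J div 2}"
  proof (rule set_eqI, rule iffI)
    fix c assume "c \<in> {c\<in>{1..J}. \<not> odd c}"
    then obtain r where "c = 2 * r" "r \<ge> 1" "2 * r \<le> J" by auto
    then show "c \<in> (\<lambda>c. 2 * c) ` {1..J div 2}" by auto
  qed auto
  also have "(\<Sum>c\<in>(\<lambda>c. 2 * c) ` {1..J div 2}. psi l J c) = (\<Sum>c\<in>{1..J div 2}. psi l J (2 * c))"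
    by (subst sum.reindex) (auto intro: inj_onI)
  also have "\<dots> = - (\<Sum>c\<in>{1..J div 2}. psi (Suc l) J c)"
    by (simp add: psi_double sum_negf)
  also have "(\<Sum>c\<in>{1..J div 2}. psi (Suc l) J c) = Tsum (Suc l) J"
    unfolding Tsum_def by (rule psi_range_half[symmetric])
  finally show ?thesis by simp
qed

lemma U_ident: assumes "J > 0"
  shows "(\<Sum>c\<in>{c\<in>{1..J}. odd c \<and> c dvd J}. int (alpha_k l (J div c))) = Rf l J + Rf (Suc l) J"
proof -
  have "(\<Sum>c\<in>{c\<in>{1..J}. odd c \<and> c dvd J}. int (alpha_k l (J div c)))
      = (\<Sum>d\<in>{d\<in>Dv J. odd (J div d)}. int (alpha_k l d))"
    by (rule odd_reindex[OF assms, symmetric])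
  also have "\<dots> = (\<Sum>d\<in>Dv J. int (alpha_k l d)) - (if even J then (\<Sum>d\<in>Dv (J div 2). int (alpha_k l d)) else 0)"
    using Dv_split[OF assms, of "\<lambda>d. int (alpha_k l d)"] by simp
  also have "\<dots> = Rf l J + Rf (Suc l) J"
    unfolding Rf_def al_E[symmetric] by simp
  finally show ?thesis .
qed

lemma Tsum_big: assumes "J \<le> l" shows "Tsum l J = Rf l J"
proof -
  have "Tsum l J = 0" unfolding Tsum_def
  proof (rule sum.neutral, rule ballI)
    fix c assume "c \<in> {1..J}"
    then have "c \<ge> 1" by simp
    have "J < 2 ^ l" using assms less_exp[of l] by linarith
    also have "\<dots> \<le> 2 ^ l * c" using \<open>c \<ge> 1\<close> by simp
    finally show "psi l J c = 0" by (rule psi_support')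
  qed
  moreover have "Rf l J = 0"
  proof -
    have "J < 2 ^ l" using assms less_exp[of l] by linarith
    then show ?thesis unfolding Rf_def using al_zero_big[of J l] al_zero_big[of "J div 2" l] by simp
  qed
  ultimately show ?thesis by simp
qed

lemma Tsum_eq: "Tsum l J = Rf l J"
proof (cases "J = 0")
  case True then show ?thesis unfolding Tsum_def Rf_def by (simp add: al_k_0)
next
  case False
  then have J: "J > 0" by simp
  have "\<forall>l. J - l \<le> m \<longrightarrow> Tsum l J = Rf l J" for m
  proof (induction m)
    case 0 then show ?case using Tsum_big by simp
  next
    case (Suc m)
    show ?case
    proof (intro allI impI)
      fix l assume "J - l \<le> Suc m"
      show "Tsum l J = Rf l J"
      proof (cases "J \<le> l")
        case True then show ?thesis by (rule Tsum_big)
      next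
        case False
        then have "J - Suc l \<le> m" using \<open>J - l \<le> Suc m\<close> by simp
        then have "Tsum (Suc l) J = Rf (Suc l) J" using Suc.IH by simp
        then show ?thesis using Tsum_step[of l J] U_ident[OF J, of l] by simp
      qed
    qed
  qed
  then show ?thesis by blast
qed



lemma od_le: "od n \<le> n"
  unfolding od_def by simp

lemma K2: assumes d: "d > 0"
  shows "(\<Sum>n\<in>{n\<in>{1..J}. d dvd n}. psi l J n) = psi l J d - (if even J then psi l (J div 2) d else 0)"
proof -
  define L where "L = l + v2 d"
  define J' where "J' = J div od d"
  have odp: "od d > 0" using od_pos[OF d] .
  have dd: "od d * 2 ^ v2 d = d" by (rule od_mult_pow)
  have set_eq: "{n\<in>{1..J}. d dvd n} = (\<lambda>c. d * c) ` {1..J div d}"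
  proof (rule set_eqI, rule iffI)
    fix n assume "n \<in> {n\<in>{1..J}. d dvd n}"
    then obtain c where c: "n = d * c" "1 \<le> n" "n \<le> J" by auto
    then have "c \<ge> 1" by (metis mult_0_right not_one_le_zero neq0_conv less_one leI)
    moreover have "c \<le> J div d"
    proof -
      have "c = n div d" using c d by simp
      moreover have "n div d \<le> J div d" using c(3) by (rule div_le_mono)
      ultimately show ?thesis by simp
    qed
    ultimately show "n \<in> (\<lambda>c. d * c) ` {1..J div d}" using c by auto
  next
    fix n assume "n \<in> (\<lambda>c. d * c) ` {1..J div d}"
    then obtain c where "c \<in> {1..J div d}" "n = d * c" by (rule imageE)
    then have c: "n = d * c" "1 \<le> c" "c \<le> J div d" by auto
    then have "d * c \<le> d * (J div d)" by simp
    also have "\<dots> \<le> J" by simp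
    finally show "n \<in> {n\<in>{1..J}. d dvd n}" using c d by simp
  qed
  have "(\<Sum>n\<in>{n\<in>{1..J}. d dvd n}. psi l J n) = (\<Sum>c\<in>{1..J div d}. psi l J (d * c))"
  proof -
    have "inj_on ((*) d) {1..J div d}" using d by (auto intro: inj_onI)
    then show ?thesis unfolding set_eq by (simp add: sum.reindex)
  qed
  also have "\<dots> = (\<Sum>c\<in>{1..J div d}. chi d * (if od d dvd J then psi L J' c else 0))"
    by (rule sum.cong) (auto simp: psi_mult[OF d] L_def J'_def)
  also have "\<dots> = chi d * (if od d dvd J then (\<Sum>c\<in>{1..J div d}. psi L J' c) else 0)"
    by (simp add: sum_distrib_left)
  also have "(\<Sum>c\<in>{1..J div d}. psi L J' c) = Tsum L J'"
    unfolding Tsum_def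
  proof (rule sum.mono_neutral_left)
    show "finite {1..J'}" by simp
    have "J div d \<le> J div od d" using od_le odp by (simp add: div_le_mono2)
    then show "{1..J div d} \<subseteq> {1..J'}" unfolding J'_def by auto
    show "\<forall>c\<in>{1..J'} - {1..J div d}. psi L J' c = 0"
    proof
      fix c assume "c \<in> {1..J'} - {1..J div d}"
      then have "c > J div d" by auto
      have "d * c > J"
      proof (rule ccontr)
        assume "\<not> J < d * c"
        then have "d * c div d \<le> J div d" by (intro div_le_mono) simp
        then show False using d \<open>c > J div d\<close> by simp
      qed
      have e: "d * c = (2 ^ v2 d * c) * od d" using dd by (simp add: algebra_simps)
      have "J' * od d \<le> J" unfolding J'_def by (rule div_times_less_eq_dividend)
      then have "J' * od d < (2 ^ v2 d * c) * od d" using \<open>d * c > J\<close> e by linarith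
      then have "2 ^ v2 d * c > J'" by (rule mult_less_cancel2[THEN iffD1, THEN conjunct2])
      moreover have "2 ^ L * c \<ge> 2 ^ v2 d * c" unfolding L_def by (simp add: power_add)
      ultimately show "psi L J' c = 0" by (intro psi_support') linarith
    qed
  qed
  also have "Tsum L J' = Rf L J'" by (rule Tsum_eq)
  finally have lhs: "(\<Sum>n\<in>{n\<in>{1..J}. d dvd n}. psi l J n) = chi d * (if od d dvd J then Rf L J' else 0)" .
  have pd: "psi l J d = chi d * (if od d dvd J then int (alpha_k L J') else 0)"
    unfolding psi_def L_def J'_def by simp
  have pd2: "psi l (J div 2) d = chi d * (if od d dvd J div 2 then int (alpha_k L (J div 2 div od d)) else 0)"
    unfolding psi_def L_def by simp
  show ?thesis
  proof (cases "od d dvd J")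
    case True
    then obtain q where q: "J = od d * q" by auto
    have q': "J' = q" unfolding J'_def using q odp by simp
    have oo: "odd (od d)" using od_odd[OF d] .
    have ev: "even J = even q" using q oo by simp
    show ?thesis
    proof (cases "even q")
      case True
      then obtain r where r: "q = 2 * r" by auto
      have "J div 2 = od d * r" using q r by simp
      then have "od d dvd J div 2" "J div 2 div od d = r" using odp by auto
      then show ?thesis using lhs pd pd2 ev True q' r \<open>od d dvd J\<close> unfolding Rf_def
        by (simp add: algebra_simps)
    next
      case False
      then show ?thesis using lhs pd pd2 ev q' \<open>od d dvd J\<close> unfolding Rf_def
        by (simp add: algebra_simps)
    qed
  next
    case False
    have "\<not> (even J \<and> od d dvd J div 2)"
    proof
      assume "even J \<and> od d dvd J div 2"
      then have "od d dvd J div 2 * 2" by auto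
      then show False using False \<open>even J \<and> _\<close> by simp
    qed
    then show ?thesis using lhs pd pd2 False by auto
  qed
qed



definition Pf :: "nat \<Rightarrow> nat \<Rightarrow> int" where
  "Pf k J = (\<Sum>n\<in>{1..J}. int (alpha_k k n) * psi 0 J n)"

lemma Pf_range: assumes "J \<le> M"
  shows "(\<Sum>n\<in>{1..M}. int (alpha_k k n) * psi 0 J n) = Pf k J"
  unfolding Pf_def
proof (rule sum.mono_neutral_right)
  show "finite {1..M}" by simp
  show "{1..J} \<subseteq> {1..M}" using assms by auto
  show "\<forall>n\<in>{1..M} - {1..J}. int (alpha_k k n) * psi 0 J n = 0"
    using psi_support' by auto
qed

lemma Pf_0: "Pf 0 J = (if J = 1 then 1 else 0)"
proof (cases "J = 0")
  case True then show ?thesis unfolding Pf_def by simp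
next
  case False
  have "Pf 0 J = (\<Sum>n\<in>{1..J}. if n = 1 then psi 0 J 1 else 0)"
    unfolding Pf_def by (rule sum.cong) (auto simp: al_0_n)
  also have "\<dots> = psi 0 J 1" using False by simp
  also have "\<dots> = (if J = 1 then 1 else 0)" by (simp add: psi_odd al_0_n)
  finally show ?thesis .
qed

lemma Pf_Suc: "Pf (Suc k) J = - (if even J then Pf k (J div 2) else 0)"
proof -
  have "Pf (Suc k) J = (\<Sum>n\<in>{1..J}. \<Sum>d\<in>{d. d \<in> {1..J} \<and> (d dvd n \<and> d < n)}. int (alpha_k k d) * psi 0 J n)"
    unfolding Pf_def
  proof (rule sum.cong[OF refl])
    fix n assume n: "n \<in> {1..J}"
    have "PD n = {d. d \<in> {1..J} \<and> (d dvd n \<and> d < n)}" unfolding PD_def using n by auto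
    then show "int (alpha_k (Suc k) n) * psi 0 J n = (\<Sum>d\<in>{d. d \<in> {1..J} \<and> (d dvd n \<and> d < n)}. int (alpha_k k d) * psi 0 J n)"
      by (simp add: al_Suc of_nat_sum sum_distrib_right)
  qed
  also have "\<dots> = (\<Sum>d\<in>{1..J}. \<Sum>n\<in>{n. n \<in> {1..J} \<and> (d dvd n \<and> d < n)}. int (alpha_k k d) * psi 0 J n)"
    by (rule sum.swap_restrict) simp_all
  also have "\<dots> = (\<Sum>d\<in>{1..J}. int (alpha_k k d) * (- (if even J then psi 0 (J div 2) d else 0)))"
  proof (rule sum.cong[OF refl])
    fix d assume d: "d \<in> {1..J}"
    have s: "{n. n \<in> {1..J} \<and> (d dvd n \<and> d < n)} = {n\<in>{1..J}. d dvd n} - {d}" using d by auto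
    have "(\<Sum>n\<in>{n\<in>{1..J}. d dvd n} - {d}. psi 0 J n) = (\<Sum>n\<in>{n\<in>{1..J}. d dvd n}. psi 0 J n) - psi 0 J d"
      using d by (subst sum_diff1) auto
    also have "\<dots> = - (if even J then psi 0 (J div 2) d else 0)"
    proof -
      have "d > 0" using d by simp
      note k = K2[OF this, where l=0 and J=J]
      show ?thesis by (subst k) simp
    qed
    finally show "(\<Sum>n\<in>{n. n \<in> {1..J} \<and> (d dvd n \<and> d < n)}. int (alpha_k k d) * psi 0 J n)
        = int (alpha_k k d) * (- (if even J then psi 0 (J div 2) d else 0))"
      unfolding s by (simp add: sum_distrib_left[symmetric])
  qed
  also have "\<dots> = - (if even J then (\<Sum>d\<in>{1..J}. int (alpha_k k d) * psi 0 (J div 2) d) else 0)"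
    by (simp add: sum_negf)
  also have "\<dots> = - (if even J then Pf k (J div 2) else 0)"
    using Pf_range[of "J div 2" J k] by simp
  finally show ?thesis .
qed

lemma Pf_eq: "Pf k J = (if J = 2 ^ k then (-1) ^ k else 0)"
proof (induction k arbitrary: J)
  case 0 then show ?case by (simp add: Pf_0)
next
  case (Suc k)
  show ?case
  proof (cases "even J")
    case True
    then obtain r where r: "J = 2 * r" by auto
    have "(J div 2 = 2 ^ k) = (J = 2 ^ Suc k)" using r by auto
    then show ?thesis using Pf_Suc[of k J] Suc.IH[of "J div 2"] True by simp
  next
    case False
    then have "J \<noteq> 2 ^ Suc k" by auto
    then show ?thesis using Pf_Suc[of k J] False by simp
  qed
qed



lemma tele: "N \<ge> 1 \<Longrightarrow> (\<Sum>c\<in>{2..N}. 1 / (real c * (real c - 1))) = 1 - 1 / real N"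
proof (induction N)
  case 0 then show ?case by simp
next
  case (Suc N)
  show ?case
  proof (cases "N = 0")
    case True then show ?thesis by simp
  next
    case False
    then have IH: "(\<Sum>c\<in>{2..N}. 1 / (real c * (real c - 1))) = 1 - 1 / real N" using Suc by simp
    have "(\<Sum>c\<in>{2..Suc N}. 1 / (real c * (real c - 1))) = (\<Sum>c\<in>{2..N}. 1 / (real c * (real c - 1))) + 1 / (real (Suc N) * (real (Suc N) - 1))"
      using False by (simp add: sum.cl_ivl_Suc)
    also have "1 / (real (Suc N) * (real (Suc N) - 1)) = 1 / real N - 1 / real (Suc N)"
      using False by (simp add: field_simps)
    also have "(\<Sum>c\<in>{2..N}. 1 / (real c * (real c - 1))) + (1 / real N - 1 / real (Suc N)) = 1 - 1 / real (Suc N)"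
      using IH by simp
    
    finally show ?thesis .
  qed
qed

lemma PD_sq: "(\<Sum>d\<in>PD n. real d ^ 2) \<le> real n ^ 2"
proof (cases "n = 0")
  case True then show ?thesis by (simp add: PD_def)
next
  case False
  have inj: "inj_on (\<lambda>d. n div d) (PD n)"
  proof (rule inj_onI)
    fix x y assume "x \<in> PD n" "y \<in> PD n" "n div x = n div y"
    then have x: "x dvd n" and y: "y dvd n" and e: "n div x = n div y" unfolding PD_def by auto
    have "x * (n div x) = n" using x by simp
    moreover have "y * (n div y) = n" using y by simp
    moreover have "n div x > 0" using \<open>x * (n div x) = n\<close> False by (metis mult_0_right neq0_conv)
    ultimately show "x = y" using e by (metis mult_right_cancel neq0_conv)
  qed
  have img: "(\<lambda>d. n div d) ` PD n \<subseteq> {2..n}"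
  proof
    fix c assume "c \<in> (\<lambda>d. n div d) ` PD n"
    then obtain d where d: "d \<in> PD n" "c = n div d" by auto
    then have dd: "d dvd n" "d \<ge> 1" "d < n" unfolding PD_def by auto
    then obtain q where q: "n = d * q" by auto
    then have "c = q" using d dd by simp
    moreover have "q \<ge> 2"
    proof -
      have "q \<noteq> 0" using q False by auto
      moreover have "q \<noteq> 1" using q dd by auto
      ultimately show ?thesis by linarith
    qed
    moreover have "q \<le> n" using q dd by simp
    ultimately show "c \<in> {2..n}" by simp
  qed
  have "(\<Sum>d\<in>PD n. real d ^ 2) = (\<Sum>c\<in>(\<lambda>d. n div d) ` PD n. real (n div c) ^ 2)"
  proof (subst sum.reindex[OF inj], rule sum.cong[OF refl])
    fix d assume "d \<in> PD n"
    then have dd: "d dvd n" "d \<ge> 1" unfolding PD_def by auto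
    then obtain q where q: "n = d * q" by auto
    then have "q > 0" using False by (metis mult_0_right neq0_conv)
    then show "real d ^ 2 = ((\<lambda>c. real (n div c) ^ 2) \<circ> (\<lambda>d. n div d)) d" using q dd by simp
  qed
  also have "\<dots> \<le> (\<Sum>c\<in>{2..n}. real (n div c) ^ 2)"
    by (rule sum_mono2) (use img in auto)
  also have "\<dots> \<le> (\<Sum>c\<in>{2..n}. real n ^ 2 * (1 / (real c * (real c - 1))))"
  proof (rule sum_mono)
    fix c assume c: "c \<in> {2..n}"
    have "real (n div c) * real c \<le> real n"
      by (metis div_times_less_eq_dividend of_nat_le_iff of_nat_mult)
    then have h: "real (n div c) \<le> real n / real c" using c by (simp add: field_simps)
    have "real (n div c) ^ 2 \<le> (real n / real c) ^ 2" using h by (intro power_mono) auto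
    also have "\<dots> = real n ^ 2 * (1 / (real c * real c))" by (simp add: power2_eq_square)
    also have "\<dots> \<le> real n ^ 2 * (1 / (real c * (real c - 1)))"
    proof (rule mult_left_mono)
      have "real c \<ge> 2" using c by simp
      then have "0 < real c * (real c - 1)" "real c * (real c - 1) \<le> real c * real c" by simp_all
      then show "1 / (real c * real c) \<le> 1 / (real c * (real c - 1))"
        by (intro divide_left_mono) simp_all
    qed simp
    finally show "real (n div c) ^ 2 \<le> real n ^ 2 * (1 / (real c * (real c - 1)))" .
  qed
  also have "\<dots> = real n ^ 2 * (1 - 1 / real n)"
    using tele[of n] False by (simp only: sum_distrib_left[symmetric])
  also have "\<dots> \<le> real n ^ 2" using False by (simp add: field_simps)
  finally show ?thesis .
qed

lemma al_bound: "real (alpha_k k n) \<le> real n ^ 2"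
proof (induction k arbitrary: n)
  case 0 then show ?case by (simp add: al_0_n)
next
  case (Suc k)
  have "real (alpha_k (Suc k) n) = (\<Sum>d\<in>PD n. real (alpha_k k d))" by (simp add: al_Suc)
  also have "\<dots> \<le> (\<Sum>d\<in>PD n. real d ^ 2)" by (rule sum_mono) (rule Suc.IH)
  also have "\<dots> \<le> real n ^ 2" by (rule PD_sq)
  finally show ?case .
qed



definition zi :: "nat \<Rightarrow> nat \<Rightarrow> int" where
  "zi i j = (if od i dvd j then int (alpha_k (v2 i) (j div od i)) else 0)"

lemma Z_zi: "Zmat i j = of_int (zi i j)"
  unfolding Zmat_def zi_def od_def Let_def by simp

lemma chi_zi: "chi m * zi m J = psi 0 J m"
  unfolding zi_def psi_def by simp

lemma chi_sq: "chi m * chi m = 1"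
  unfolding chi_def by (simp add: power_mult_distrib[symmetric])

lemma chi_sq_c: "complex_of_int (chi m) * complex_of_int (chi m) = 1"
  by (metis chi_sq of_int_1 of_int_mult)

lemma zi_support: assumes "m > j" shows "zi m j = 0"
proof -
  have "psi 0 j m = 0" using assms by (intro psi_support') simp
  then have "chi m * zi m j = 0" by (simp add: chi_zi)
  moreover have "chi m \<noteq> 0" unfolding chi_def by simp
  ultimately show ?thesis by simp
qed

lemma mult_set_eq: fixes d J :: nat assumes d: "d > 0" shows "{n\<in>{1..J}. d dvd n} = (\<lambda>c. d * c) ` {1..J div d}"
proof (rule set_eqI, rule iffI)
  fix n assume "n \<in> {n\<in>{1..J}. d dvd n}"
  then obtain c where c: "n = d * c" "1 \<le> n" "n \<le> J" by auto
  have "c \<ge> 1"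
  proof (rule ccontr)
    assume "\<not> 1 \<le> c"
    then have "c = 0" by simp
    then show False using c by simp
  qed
  moreover have "c \<le> J div d"
  proof -
    have "c = n div d" using c d by simp
    moreover have "n div d \<le> J div d" using c(3) by (rule div_le_mono)
    ultimately show ?thesis by simp
  qed
  ultimately show "n \<in> (\<lambda>c. d * c) ` {1..J div d}" using c by auto
next
  fix n assume "n \<in> (\<lambda>c. d * c) ` {1..J div d}"
  then obtain c where "c \<in> {1..J div d}" "n = d * c" by (rule imageE)
  then have c: "n = d * c" "1 \<le> c" "c \<le> J div d" by auto
  then have "d * c \<le> d * (J div d)" by simp
  also have "\<dots> \<le> J" by simp
  finally show "n \<in> {n\<in>{1..J}. d dvd n}" using c d by simp
qed

lemma Qlem: assumes i: "i > 0"
  shows "(\<Sum>m\<in>{1..J}. zi i m * psi 0 J m) = (if i = J then chi i else 0)"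
proof -
  define d where "d = od i"
  define k where "k = v2 i"
  have d0: "d > 0" unfolding d_def using od_pos[OF i] .
  have dodd: "odd d" unfolding d_def using od_odd[OF i] .
  have idk: "i = d * 2 ^ k" unfolding d_def k_def using od_mult_pow[of i] by simp
  have "(\<Sum>m\<in>{1..J}. zi i m * psi 0 J m) = (\<Sum>m\<in>{1..J}. if d dvd m then int (alpha_k k (m div d)) * psi 0 J m else 0)"
    by (rule sum.cong) (auto simp: zi_def d_def k_def)
  also have "\<dots> = (\<Sum>m\<in>{m\<in>{1..J}. d dvd m}. int (alpha_k k (m div d)) * psi 0 J m)"
    by (rule sum.inter_filter[symmetric]) simp
  also have "\<dots> = (\<Sum>n\<in>{1..J div d}. int (alpha_k k n) * psi 0 J (d * n))"
  proof -
    have "inj_on ((*) d) {1..J div d}" using d0 by (auto intro: inj_onI)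
    then show ?thesis unfolding mult_set_eq[OF d0] using d0 by (simp add: sum.reindex)
  qed
  also have "\<dots> = (\<Sum>n\<in>{1..J div d}. int (alpha_k k n) * (if d dvd J then psi 0 (J div d) n else 0))"
  proof (rule sum.cong[OF refl])
    fix n assume "n \<in> {1..J div d}"
    then have "n > 0" by simp
    then show "int (alpha_k k n) * psi 0 J (d * n) = int (alpha_k k n) * (if d dvd J then psi 0 (J div d) n else 0)"
      using psi_mult[OF d0, of n 0 J] od_odd_id[OF dodd] v2_odd[OF dodd] chi_odd[OF dodd] by simp
  qed
  also have "\<dots> = (if d dvd J then Pf k (J div d) else 0)"
    unfolding Pf_def by simp
  also have "\<dots> = (if i = J then chi i else 0)"
  proof (cases "d dvd J \<and> J div d = 2 ^ k")
    case True
    then have "J = i" using idk by (metis dvd_mult_div_cancel)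
    then show ?thesis using True Pf_eq[of k "J div d"] unfolding chi_def k_def by simp
  next
    case False
    have "i \<noteq> J"
    proof
      assume "i = J"
      then have "d dvd J" "J div d = 2 ^ k" using idk d0 by auto
      then show False using False by simp
    qed
    then show ?thesis using False Pf_eq[of k "J div d"] by auto
  qed
  finally show ?thesis .
qed

lemma XA: assumes "i \<ge> 1" shows "(Xmat \<odot> A) i j = of_int (chi i) * A i j"
proof -
  have "(Xmat \<odot> A) i j = infsum (\<lambda>k. Xmat i k * A k j) {1..}" unfolding mmult_def ..
  also have "\<dots> = infsum (\<lambda>k. Xmat i k * A k j) {i}"
    by (rule infsum_cong_neutral) (use assms in \<open>auto simp: Xmat_def\<close>)
  also have "\<dots> = of_int (chi i) * A i j" by (simp add: Xmat_def chi_def)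
  finally show ?thesis .
qed

lemma AX: assumes "j \<ge> 1" shows "(A \<odot> Xmat) i j = A i j * of_int (chi j)"
proof -
  have "(A \<odot> Xmat) i j = infsum (\<lambda>k. A i k * Xmat k j) {1..}" unfolding mmult_def ..
  also have "\<dots> = infsum (\<lambda>k. A i k * Xmat k j) {j}"
    by (rule infsum_cong_neutral) (use assms in \<open>auto simp: Xmat_def\<close>)
  also have "\<dots> = A i j * of_int (chi j)" by (simp add: Xmat_def chi_def)
  finally show ?thesis .
qed

lemma W_eq: assumes "i \<ge> 1" "j \<ge> 1"
  shows "(Xmat \<odot> Zmat \<odot> Xmat) i j = of_int (chi i * zi i j * chi j)"
  using AX[OF assms(2), of "Xmat \<odot> Zmat" i] XA[OF assms(1), of Zmat j] by (simp add: Z_zi)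

lemma prod_fin: assumes "\<And>m. m > j \<Longrightarrow> B m j = 0"
  shows "(A \<odot> B) i j = (\<Sum>m\<in>{1..j}. A i m * B m j)"
proof -
  have "(A \<odot> B) i j = infsum (\<lambda>m. A i m * B m j) {1..}" unfolding mmult_def ..
  also have "\<dots> = infsum (\<lambda>m. A i m * B m j) {1..j}"
    by (rule infsum_cong_neutral) (auto simp: assms)
  finally show ?thesis by simp
qed

theorem theorem4p6:
  shows "mat_eq (Zmat \<odot> (Xmat \<odot> Zmat \<odot> Xmat)) Imat
       \<and> mat_eq ((Xmat \<odot> Zmat \<odot> Xmat) \<odot> Zmat) Imat
       \<and> (Xmat \<odot> Zmat \<odot> Xmat) \<in> DR0"
proof (intro conjI)
  show "mat_eq (Zmat \<odot> (Xmat \<odot> Zmat \<odot> Xmat)) Imat"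
    unfolding mat_eq_def
  proof (intro allI impI)
    fix i j :: nat assume i: "i \<ge> 1" and j: "j \<ge> 1"
    have "(Zmat \<odot> (Xmat \<odot> Zmat \<odot> Xmat)) i j = (\<Sum>m\<in>{1..j}. Zmat i m * (Xmat \<odot> Zmat \<odot> Xmat) m j)"
    proof (rule prod_fin)
      fix m assume "m > j"
      then show "(Xmat \<odot> Zmat \<odot> Xmat) m j = 0" using W_eq[of m j] j zi_support[of j m] by simp
    qed
    also have "\<dots> = (\<Sum>m\<in>{1..j}. of_int (chi j * (zi i m * psi 0 j m)))"
    proof (rule sum.cong[OF refl])
      fix m assume "m \<in> {1..j}"
      then have "m \<ge> 1" by simp
      then show "Zmat i m * (Xmat \<odot> Zmat \<odot> Xmat) m j = of_int (chi j * (zi i m * psi 0 j m))"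
        using W_eq[of m j] j chi_zi[of m j, symmetric] by (simp add: Z_zi algebra_simps)
    qed
    also have "\<dots> = of_int (chi j * (\<Sum>m\<in>{1..j}. zi i m * psi 0 j m))"
      by (simp add: sum_distrib_left)
    also have "\<dots> = Imat i j" using Qlem[of i j] i chi_sq_c[of j] by (simp add: Imat_def)
    finally show "(Zmat \<odot> (Xmat \<odot> Zmat \<odot> Xmat)) i j = Imat i j" .
  qed
next
  show "mat_eq ((Xmat \<odot> Zmat \<odot> Xmat) \<odot> Zmat) Imat"
    unfolding mat_eq_def
  proof (intro allI impI)
    fix i j :: nat assume i: "i \<ge> 1" and j: "j \<ge> 1"
    have "((Xmat \<odot> Zmat \<odot> Xmat) \<odot> Zmat) i j = (\<Sum>m\<in>{1..j}. (Xmat \<odot> Zmat \<odot> Xmat) i m * Zmat m j)"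
    proof (rule prod_fin)
      fix m assume "m > j"
      then show "Zmat m j = 0" using zi_support[of j m] by (simp add: Z_zi)
    qed
    also have "\<dots> = (\<Sum>m\<in>{1..j}. of_int (chi i * (zi i m * psi 0 j m)))"
    proof (rule sum.cong[OF refl])
      fix m assume "m \<in> {1..j}"
      then have "m \<ge> 1" by simp
      then show "(Xmat \<odot> Zmat \<odot> Xmat) i m * Zmat m j = of_int (chi i * (zi i m * psi 0 j m))"
        using W_eq[of i m] i chi_zi[of m j, symmetric] by (simp add: Z_zi algebra_simps)
    qed
    also have "\<dots> = of_int (chi i * (\<Sum>m\<in>{1..j}. zi i m * psi 0 j m))"
      by (simp add: sum_distrib_left)
    also have "\<dots> = Imat i j" using Qlem[of i j] i chi_sq_c[of i] chi_sq_c[of j] by (simp add: Imat_def)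
    finally show "((Xmat \<odot> Zmat \<odot> Xmat) \<odot> Zmat) i j = Imat i j" .
  qed
next
  have bound: "cmod ((Xmat \<odot> Zmat \<odot> Xmat) i j) \<le> real j ^ 2" if i: "i \<ge> 1" and j: "j \<ge> 1" for i j
  proof -
    have c1: "\<bar>real_of_int (chi n)\<bar> = 1" for n unfolding chi_def by (simp add: power_abs)
    have "cmod ((Xmat \<odot> Zmat \<odot> Xmat) i j) = \<bar>real_of_int (chi i * zi i j * chi j)\<bar>"
      using W_eq[OF i j] by (simp only: norm_of_int)
    also have "\<dots> = \<bar>real_of_int (zi i j)\<bar>" by (simp add: abs_mult c1)
    also have "\<dots> \<le> real j ^ 2"
    proof (cases "od i dvd j")
      case True
      have "real (alpha_k (v2 i) (j div od i)) \<le> real (j div od i) ^ 2" by (rule al_bound)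
      also have "\<dots> \<le> real j ^ 2" by (simp add: power_mono div_le_dividend)
      finally show ?thesis using True by (simp add: zi_def)
    next
      case False then show ?thesis by (simp add: zi_def)
    qed
    finally show ?thesis .
  qed
  have A: "\<forall>i\<ge>1. \<forall>j\<ge>1. real i > 1 * real j powr (2::real) \<longrightarrow> (Xmat \<odot> Zmat \<odot> Xmat) i j = 0"
  proof (intro allI impI)
    fix i j :: nat assume i: "i \<ge> 1" and j: "j \<ge> 1" and gt: "real i > 1 * real j powr (2::real)"
    have "real j powr (2::real) = real j ^ 2" using j by (simp add: powr_realpow)
    also have "\<dots> \<ge> real j" using j by (simp add: power2_eq_square)
    finally have "i > j" using gt by simp
    then show "(Xmat \<odot> Zmat \<odot> Xmat) i j = 0" using W_eq[OF i j] zi_support[of j i] by simp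
  qed
  have B: "\<forall>i\<ge>1. \<forall>j\<ge>1. cmod ((Xmat \<odot> Zmat \<odot> Xmat) i j) \<le> 1 * real j powr (2::real)"
  proof (intro allI impI)
    fix i j :: nat assume i: "i \<ge> 1" and j: "j \<ge> 1"
    have "real j powr (2::real) = real j ^ 2" using j by (simp add: powr_realpow)
    then show "cmod ((Xmat \<odot> Zmat \<odot> Xmat) i j) \<le> 1 * real j powr (2::real)" using bound[OF i j] by simp
  qed
  have "\<exists>C c :: real. C > 0 \<and> c > 0 \<and>
      (\<forall>i\<ge>1. \<forall>j\<ge>1. real i > C * real j powr c \<longrightarrow> (Xmat \<odot> Zmat \<odot> Xmat) i j = 0) \<and>
      (\<forall>i\<ge>1. \<forall>j\<ge>1. cmod ((Xmat \<odot> Zmat \<odot> Xmat) i j) \<le> C * real j powr c)"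
    by (rule exI[where x=1], rule exI[where x=2]) (use A B in simp)
  then show "(Xmat \<odot> Zmat \<odot> Xmat) \<in> DR0" unfolding DR0_def by simp
qed


end
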